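(* Let $\{c_n\}_{n\ge1}$ be a real sequence with $\sum_{n=1}^\infty |c_n|<+\infty$, such that $\sum_{n=N}^{\infty}(c_n)^2>0$ and $\sum_{n=N}^\infty c_n\neq 0$ for every $N\ge1$. Let $f(x):=\sum_{n=1}^\infty c_n\varphi^{(n)}(x)$ and $f_N(x):=\sum_{n=1}^{N-1}c_n\varphi^{(n)}(x)$ for $x\in[0,1]$. If for every $K>0$ $$\sum_{N=1}^\infty\exp\left\{-K\cdot\frac{\left(\sum_{n=N}^\infty c_n\right)^2}{\sum_{n=N}^\infty (c_n)^2}\right\}<+\infty,$$ then $$\lim_{N\to\infty}\frac{f(x)-f_N(x)}{\frac12\sum_{n=N}^\infty c_n}=1\quad\text{for Lebesgue-a.e. } x\in[0,1].$$
   Context: The tent map on $[0,1]$ is $\varphi(x)=2x$ for $x\in[0,1/2]$ and $\varphi(x)=2(1-x)$ for $x\in[1/2,1]$; it is extended to $\mathbb{R}$ by $\varphi(x):=\varphi(x-[x])$, and $\varphi^{(n)}$ denotes the $n$-fold iterate of $\varphi$, so that $\varphi^{(n)}(x)=\varphi(2^{n-1}x)$. *)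

theory Defs
  imports "HOL-Analysis.Analysis"
begin

definition tent :: "real \<Rightarrow> real" where
  "tent x = (let y = x - of_int \<lfloor>x\<rfloor> in if y \<le> 1/2 then 2 * y else 2 * (1 - y))"

definition tent_iter :: "nat \<Rightarrow> real \<Rightarrow> real" where
  "tent_iter n = tent ^^ n"

end

theory Submission
  imports Defs "HOL-Probability.Hoeffding"
begin

lemma cosh_bound: "exp (x::real) + exp (-x) \<le> 2 * exp (x^2/2)"
proof -
  have "\<bar>x\<bar> \<ge> 0" by simp
  have A: "-(2*\<bar>x\<bar>) * (1/2) + ln (1 + (1/2) * (exp (2*\<bar>x\<bar>) - 1)) \<le> (2*\<bar>x\<bar>)^2/8"
    by (rule Hoeffdings_lemma_aux) auto
  have "exp (x) + exp (-x) = exp \<bar>x\<bar> + exp (-\<bar>x\<bar>)" by (cases "x \<ge> 0") auto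
  also have "\<dots> = 2 * exp (-\<bar>x\<bar>) * (1 + (1/2) * (exp (2*\<bar>x\<bar>) - 1))"
    by (simp add: algebra_simps flip: exp_add)
  also have "(1 + (1/2) * (exp (2*\<bar>x\<bar>) - 1)) = exp (ln (1 + (1/2) * (exp (2*\<bar>x\<bar>) - 1)))"
    by (simp add: add_pos_nonneg)
  also have "2 * exp (-\<bar>x\<bar>) * \<dots> = 2 * exp (-(2*\<bar>x\<bar>) * (1/2) + ln (1 + (1/2) * (exp (2*\<bar>x\<bar>) - 1)))"
    by (subst exp_add) (simp add: mult.assoc)
  also have "\<dots> \<le> 2 * exp ((2*\<bar>x\<bar>)^2/8)" using A by simp
  also have "(2*\<bar>x\<bar>)^2/8 = x^2/2" by (simp add: power2_eq_square)
  finally show ?thesis .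
qed

lemma tent_meas[measurable]: "tent \<in> borel_measurable borel"
  unfolding tent_def Let_def by measurable

lemma funpow_meas[measurable]: "(tent ^^ n) \<in> borel_measurable borel"
  by (induction n) (auto simp: measurable_comp)

lemma tent_range: "tent x \<in> {0..1}"
proof -
  have "x - of_int \<lfloor>x\<rfloor> \<ge> 0" "x - of_int \<lfloor>x\<rfloor> < 1" by linarith+
  then show ?thesis unfolding tent_def Let_def by auto
qed

lemma tent_low: "y \<in> {0..1/2} \<Longrightarrow> tent y = 2*y"
proof -
  assume y: "y \<in> {0..1/2}"
  then have "\<lfloor>y\<rfloor> = 0" by (simp add: floor_eq_iff)
  then show ?thesis using y unfolding tent_def Let_def by auto
qed

lemma tent_high: "y \<in> {1/2..1} \<Longrightarrow> tent y = 2 - 2*y"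
proof -
  assume y: "y \<in> {1/2..1}"
  show ?thesis
  proof (cases "y = 1")
    case True then show ?thesis unfolding tent_def by simp
  next
    case False
    then have "\<lfloor>y\<rfloor> = 0" using y by (simp add: floor_eq_iff)
    then show ?thesis using y unfolding tent_def Let_def by auto
  qed
qed

lemma tent_sym: "y \<in> {0..1} \<Longrightarrow> tent (1 - y) = tent y"
proof -
  assume y: "y \<in> {0..1}"
  show ?thesis
  proof (cases "y \<le> 1/2")
    case True then show ?thesis using y tent_low[of y] tent_high[of "1-y"] by auto
  next
    case False then show ?thesis using y tent_high[of y] tent_low[of "1-y"] by auto
  qed
qed

lemma tent_inv:
  fixes h :: "real \<Rightarrow> ennreal"
  assumes [measurable]: "h \<in> borel_measurable borel"
  shows "(\<integral>\<^sup>+y. indicator {0..1} y * h (tent y) \<partial>lborel) \<le> (\<integral>\<^sup>+y. indicator {0..1} y * h y \<partial>lborel)"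
proof -
  let ?I = "(\<integral>\<^sup>+y. indicator {0..1} y * h y \<partial>lborel)"
  have "(\<integral>\<^sup>+y. indicator {0..1} y * h (tent y) \<partial>lborel) \<le>
      (\<integral>\<^sup>+y. indicator {0..1/2} y * h (2*y) + indicator {1/2..1} y * h (2 - 2*y) \<partial>lborel)"
  proof (rule nn_integral_mono)
    fix y :: real
    show "indicator {0..1} y * h (tent y) \<le> indicator {0..1/2} y * h (2*y) + indicator {1/2..1} y * h (2 - 2*y)"
    proof (cases "y \<in> {0..1/2}")
      case True then show ?thesis using tent_low[of y] by (simp add: indicator_def)
    next
      case False
      show ?thesis
      proof (cases "y \<in> {1/2..1}")
        case True then show ?thesis using tent_high[of y] False by (simp add: indicator_def)
      next
        case False2: False
        then have "y \<notin> {0..1}" using False by auto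
        then show ?thesis by simp
      qed
    qed
  qed
  also have "\<dots> = (\<integral>\<^sup>+y. indicator {0..1/2} y * h (2*y) \<partial>lborel) + (\<integral>\<^sup>+y. indicator {1/2..1} y * h (2 - 2*y) \<partial>lborel)"
    by (rule nn_integral_add) auto
  also have "(\<integral>\<^sup>+y. indicator {0..1/2} y * h (2*y) \<partial>lborel) = ennreal (1/2) * ?I"
  proof -
    have "(\<integral>\<^sup>+y. indicator {0..1/2} y * h (2*y) \<partial>lborel) = 
       ennreal \<bar>1/2\<bar> * (\<integral>\<^sup>+x. indicator {0..1/2} (0 + 1/2 * x) * h (2*(0 + 1/2*x)) \<partial>lborel)"
      by (rule nn_integral_real_affine) auto
    also have "(\<lambda>x::real. indicator {0..1/2} (0 + 1/2 * x) * h (2*(0 + 1/2*x))) = (\<lambda>x. indicator {0..1} x * h x)"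
      by (auto simp: indicator_def fun_eq_iff)
    finally show ?thesis by simp
  qed
  also have "(\<integral>\<^sup>+y. indicator {1/2..1} y * h (2 - 2*y) \<partial>lborel) = ennreal (1/2) * ?I"
  proof -
    have "(\<integral>\<^sup>+y. indicator {1/2..1} y * h (2 - 2*y) \<partial>lborel) = 
       ennreal \<bar>-1/2\<bar> * (\<integral>\<^sup>+x. indicator {1/2..1} (1 + -1/2 * x) * h (2 - 2*(1 + -1/2*x)) \<partial>lborel)"
      by (rule nn_integral_real_affine) auto
    also have "(\<lambda>x::real. indicator {1/2..1} (1 + -1/2 * x) * h (2 - 2*(1 + -1/2*x))) = (\<lambda>x. indicator {0..1} x * h x)"
      by (auto simp: indicator_def fun_eq_iff)
    finally show ?thesis by simp
  qed
  also have "ennreal (1/2) * ?I + ennreal (1/2) * ?I = ?I"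
  proof -
    have "ennreal (1/2) + ennreal (1/2) = 1" by (subst ennreal_plus[symmetric]) auto
    then show ?thesis by (metis distrib_right mult_1)
  qed
  finally show ?thesis .
qed

lemma tent_sym_int:
  fixes K :: "real \<Rightarrow> real"
  assumes [measurable]: "K \<in> borel_measurable borel" and Kp: "\<And>z. K z \<ge> 0"
  shows "(\<integral>\<^sup>+y. indicator {0..1} y * ennreal (exp (a*(y-1/2)) * K (tent y)) \<partial>lborel)
     \<le> ennreal (exp (a^2/8)) * (\<integral>\<^sup>+y. indicator {0..1} y * ennreal (K (tent y)) \<partial>lborel)"
proof -
  define A where "A = (\<integral>\<^sup>+y. indicator {0..1} y * ennreal (exp (a*(y-1/2)) * K (tent y)) \<partial>lborel)"
  define B where "B = (\<integral>\<^sup>+y. indicator {0..1} y * ennreal (exp (-a*(y-1/2)) * K (tent y)) \<partial>lborel)"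
  define J where "J = (\<integral>\<^sup>+y. indicator {0..1} y * ennreal (K (tent y)) \<partial>lborel)"
  have AB: "A = B"
  proof -
    have "A = ennreal \<bar>-1\<bar> * (\<integral>\<^sup>+x. indicator {0..1} (1 + -1*x) * ennreal (exp (a*((1 + -1*x)-1/2)) * K (tent (1 + -1*x))) \<partial>lborel)"
      unfolding A_def by (rule nn_integral_real_affine) auto
    also have "(\<lambda>x. indicator {0..1} (1 + -1*x) * ennreal (exp (a*((1 + -1*x)-1/2)) * K (tent (1 + -1*x))))
       = (\<lambda>y. indicator {0..1} y * ennreal (exp (-a*(y-1/2)) * K (tent y)))"
    proof
      fix x :: real
      show "indicator {0..1} (1 + -1*x) * ennreal (exp (a*((1 + -1*x)-1/2)) * K (tent (1 + -1*x)))
         = indicator {0..1} x * ennreal (exp (-a*(x-1/2)) * K (tent x))"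
      proof (cases "x \<in> {0..1}")
        case True
        then have "tent (1 - x) = tent x" by (rule tent_sym)
        moreover have "a*((1 + -1*x)-1/2) = -a*(x-1/2)" by (simp add: algebra_simps)
        ultimately show ?thesis using True by (simp add: indicator_def)
      next
        case False
        then have "1 + -1*x \<notin> {0..1}" by auto
        then show ?thesis using False by simp
      qed
    qed
    finally show ?thesis unfolding B_def by simp
  qed
  have "A + B = (\<integral>\<^sup>+y. indicator {0..1} y * ennreal (exp (a*(y-1/2)) * K (tent y)) +
                     indicator {0..1} y * ennreal (exp (-a*(y-1/2)) * K (tent y)) \<partial>lborel)"
    unfolding A_def B_def by (rule nn_integral_add[symmetric]) auto
  also have "\<dots> \<le> (\<integral>\<^sup>+y. ennreal (2 * exp (a^2/8)) * (indicator {0..1} y * ennreal (K (tent y))) \<partial>lborel)"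
  proof (rule nn_integral_mono)
    fix y :: real
    show "indicator {0..1} y * ennreal (exp (a*(y-1/2)) * K (tent y)) +
                     indicator {0..1} y * ennreal (exp (-a*(y-1/2)) * K (tent y))
         \<le> ennreal (2 * exp (a^2/8)) * (indicator {0..1} y * ennreal (K (tent y)))"
    proof (cases "y \<in> {0..1}")
      case True
      have k: "K (tent y) \<ge> 0" by (rule Kp)
      have "exp (a*(y-1/2)) + exp (-(a*(y-1/2))) \<le> 2 * exp ((a*(y-1/2))^2/2)" by (rule cosh_bound)
      also have "(a*(y-1/2))^2/2 \<le> a^2/8"
      proof -
        have "(y-1/2)^2 = 1/4 - y*(1-y)" by (simp add: power2_eq_square algebra_simps)
        moreover have "y*(1-y) \<ge> 0" using True by (intro mult_nonneg_nonneg) auto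
        ultimately have "(y-1/2)^2 \<le> 1/4" by linarith
        then have "a^2 * (y-1/2)^2 \<le> a^2 * (1/4)" by (intro mult_left_mono) auto
        then show ?thesis by (simp add: power_mult_distrib)
      qed
      finally have e: "exp (a*(y-1/2)) + exp (-(a*(y-1/2))) \<le> 2 * exp (a^2/8)" by simp
      have "ennreal (exp (a*(y-1/2)) * K (tent y)) + ennreal (exp (-a*(y-1/2)) * K (tent y))
           = ennreal ((exp (a*(y-1/2)) + exp (-(a*(y-1/2)))) * K (tent y))"
      proof -
        have "ennreal (exp (a*(y-1/2)) * K (tent y)) + ennreal (exp (-a*(y-1/2)) * K (tent y))
           = ennreal (exp (a*(y-1/2)) * K (tent y) + exp (-a*(y-1/2)) * K (tent y))"
          using k by (intro ennreal_plus[symmetric]) auto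
        then show ?thesis by (simp add: distrib_right)
      qed
      also have "\<dots> \<le> ennreal (2 * exp (a^2/8) * K (tent y))"
        using e k by (intro ennreal_leI mult_right_mono) auto
      also have "\<dots> = ennreal (2 * exp (a^2/8)) * ennreal (K (tent y))"
        using k by (simp add: ennreal_mult)
      finally show ?thesis using True by simp
    next
      case False then show ?thesis by simp
    qed
  qed
  also have "\<dots> = ennreal (2 * exp (a^2/8)) * J"
    unfolding J_def by (rule nn_integral_cmult) auto
  finally have le: "A + B \<le> ennreal (2 * exp (a^2/8)) * J" .
  have "A = ennreal (1/2) * (A + A)"
  proof -
    have "ennreal (1/2) * ennreal 2 = 1" by (subst ennreal_mult[symmetric]) auto
    then show ?thesis by (metis mult_2 mult.assoc mult_1 ennreal_numeral)
  qed
  also have "\<dots> \<le> ennreal (1/2) * (ennreal (2 * exp (a^2/8)) * J)"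
    using le AB by (intro mult_left_mono) auto
  also have "\<dots> = ennreal (exp (a^2/8)) * J"
  proof -
    have "ennreal (1/2) * ennreal (2 * exp (a^2/8)) = ennreal (exp (a^2/8))"
      by (subst ennreal_mult[symmetric]) auto
    then show ?thesis by (metis mult.assoc)
  qed
  finally show ?thesis unfolding A_def J_def .
qed

definition E :: "(nat \<Rightarrow> real) \<Rightarrow> nat \<Rightarrow> real \<Rightarrow> real" where
  "E d m y = (\<Sum>j<m. d j * ((tent^^j) y - 1/2))"

lemma E_meas[measurable]: "E d m \<in> borel_measurable borel"
  unfolding E_def by measurable

lemma E_Suc: "E d (Suc m) y = d 0 * (y - 1/2) + E (\<lambda>j. d (Suc j)) m (tent y)"
  unfolding E_def sum.lessThan_Suc_shift by (simp add: funpow_Suc_right del: funpow.simps)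

lemma mgf:
  "(\<integral>\<^sup>+y. indicator {0..1} y * ennreal (exp (E d m y)) \<partial>lborel) \<le> ennreal (exp ((\<Sum>j<m. (d j)^2)/8))"
proof (induction m arbitrary: d)
  case 0
  then show ?case by (simp add: E_def)
next
  case (Suc m)
  define K where "K = (\<lambda>z. exp (E (\<lambda>j. d (Suc j)) m z))"
  have [measurable]: "K \<in> borel_measurable borel" unfolding K_def by measurable
  have "(\<integral>\<^sup>+y. indicator {0..1} y * ennreal (exp (E d (Suc m) y)) \<partial>lborel)
      = (\<integral>\<^sup>+y. indicator {0..1} y * ennreal (exp (d 0 * (y-1/2)) * K (tent y)) \<partial>lborel)"
    by (simp add: E_Suc K_def exp_add)
  also have "\<dots> \<le> ennreal (exp ((d 0)^2/8)) * (\<integral>\<^sup>+y. indicator {0..1} y * ennreal (K (tent y)) \<partial>lborel)"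
    by (rule tent_sym_int) (auto simp: K_def)
  also have "\<dots> \<le> ennreal (exp ((d 0)^2/8)) * (\<integral>\<^sup>+y. indicator {0..1} y * ennreal (K y) \<partial>lborel)"
    by (intro mult_left_mono tent_inv[of "\<lambda>z. ennreal (K z)"]) auto
  also have "\<dots> \<le> ennreal (exp ((d 0)^2/8)) * ennreal (exp ((\<Sum>j<m. (d (Suc j))^2)/8))"
    unfolding K_def by (intro mult_left_mono Suc.IH) auto
  also have "\<dots> = ennreal (exp ((\<Sum>j<Suc m. (d j)^2)/8))"
    unfolding sum.lessThan_Suc_shift by (simp add: ennreal_mult[symmetric] exp_add[symmetric] add_divide_distrib)
  finally show ?case .
qed

definition D :: "(nat \<Rightarrow> real) \<Rightarrow> nat \<Rightarrow> real \<Rightarrow> real" where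
  "D c N x = (\<Sum>j. (if N \<le> j then c j * ((tent^^j) x - 1/2) else 0))"

definition V :: "(nat \<Rightarrow> real) \<Rightarrow> nat \<Rightarrow> real" where
  "V c N = (\<Sum>j. (if N \<le> j then (c j)^2 else 0))"

lemma tent_range': "0 \<le> tent x" "tent x \<le> 1" using tent_range[of x] by auto

lemma funpow_range: "j \<ge> 1 \<Longrightarrow> (tent^^j) x \<in> {0..1}"
  by (cases j) (auto simp: tent_range')

lemma D_summable:
  fixes c :: "nat \<Rightarrow> real"
  assumes "summable (\<lambda>j. \<bar>c j\<bar>)"
  shows "summable (\<lambda>j. (if N \<le> j then c j * ((tent^^j) x - 1/2) else 0))"
proof (rule summable_comparison_test'[OF assms, of 1])
  fix j :: nat assume "j \<ge> 1"
  then have "(tent^^j) x \<in> {0..1}" by (rule funpow_range)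
  then have "\<bar>(tent^^j) x - 1/2\<bar> \<le> 1" by auto
  then show "norm (if N \<le> j then c j * ((tent^^j) x - 1/2) else 0) \<le> \<bar>c j\<bar>"
    by (auto simp: abs_mult intro: mult_left_le)
qed

lemma V_summable:
  fixes c :: "nat \<Rightarrow> real"
  assumes "summable (\<lambda>j. \<bar>c j\<bar>)"
  shows "summable (\<lambda>j. (if N \<le> j then (c j)^2 else 0))"
proof -
  have "c \<longlonglongrightarrow> 0" using summable_LIMSEQ_zero[OF assms] by (simp add: tendsto_rabs_zero_iff)
  then obtain N0 where N0: "\<And>j. j \<ge> N0 \<Longrightarrow> \<bar>c j\<bar> < 1"
    using LIMSEQ_D[of c 0 1] by auto
  show ?thesis
  proof (rule summable_comparison_test'[OF assms, of N0])
    fix j assume "j \<ge> N0"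
    then have "\<bar>c j\<bar> < 1" by (rule N0)
    then have "\<bar>c j\<bar> * \<bar>c j\<bar> \<le> \<bar>c j\<bar>" by (intro mult_left_le) auto
    then show "norm (if N \<le> j then (c j)^2 else 0) \<le> \<bar>c j\<bar>"
      by (auto simp: power2_eq_square abs_mult_self_eq)
  qed
qed

lemma D_meas[measurable]:
  assumes "summable (\<lambda>j. \<bar>c j\<bar>)"
  shows "D c N \<in> borel_measurable borel"
proof (rule borel_measurable_LIMSEQ_real)
  fix x :: real
  show "(\<lambda>M. \<Sum>j<M. (if N \<le> j then c j * ((tent^^j) x - 1/2) else 0)) \<longlonglongrightarrow> D c N x"
    unfolding D_def using D_summable[OF assms] by (intro summable_LIMSEQ) 
  fix M show "(\<lambda>x. \<Sum>j<M. (if N \<le> j then c j * ((tent^^j) x - 1/2) else 0)) \<in> borel_measurable borel"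
    by measurable
qed

lemma mgf_D:
  assumes sc: "summable (\<lambda>j. \<bar>c j\<bar>)"
  shows "(\<integral>\<^sup>+x. indicator {0..1} x * ennreal (exp (l * D c N x)) \<partial>lborel) \<le> ennreal (exp (l^2 * V c N / 8))"
proof -
  define d where "d = (\<lambda>j. l * (if N \<le> j then c j else 0))"
  define u where "u = (\<lambda>M x. indicator {0..1} x * ennreal (exp (E d M x)))"
  have Ed: "E d M x = l * (\<Sum>j<M. (if N \<le> j then c j * ((tent^^j) x - 1/2) else 0))" for M x
    unfolding E_def d_def by (simp add: sum_distrib_left) (intro sum.cong, auto)
  have lim: "(\<lambda>M. u M x) \<longlonglongrightarrow> indicator {0..1} x * ennreal (exp (l * D c N x))" for x
  proof -
    have "(\<lambda>M. E d M x) \<longlonglongrightarrow> l * D c N x"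
      unfolding Ed D_def using D_summable[OF sc] by (intro tendsto_mult_left summable_LIMSEQ)
    then have "(\<lambda>M. exp (E d M x)) \<longlonglongrightarrow> exp (l * D c N x)" by (intro tendsto_exp)
    then have "(\<lambda>M. ennreal (exp (E d M x))) \<longlonglongrightarrow> ennreal (exp (l * D c N x))" by (intro tendsto_ennrealI)
    then show ?thesis unfolding u_def by (intro ennreal_tendsto_cmult) (auto simp: indicator_def)
  qed
  have "(\<integral>\<^sup>+x. indicator {0..1} x * ennreal (exp (l * D c N x)) \<partial>lborel) = (\<integral>\<^sup>+x. liminf (\<lambda>M. u M x) \<partial>lborel)"
    by (intro nn_integral_cong) (simp add: lim_imp_Liminf[OF trivial_limit_sequentially lim])
  also have "\<dots> \<le> liminf (\<lambda>M. (\<integral>\<^sup>+x. u M x \<partial>lborel))"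
    by (rule nn_integral_liminf) (simp add: u_def)
  also have "\<dots> \<le> ennreal (exp (l^2 * V c N / 8))"
  proof (rule Liminf_le)
    show "sequentially \<noteq> bot" by simp
    show "\<forall>\<^sub>F M in sequentially. (\<integral>\<^sup>+x. u M x \<partial>lborel) \<le> ennreal (exp (l^2 * V c N / 8))"
    proof (rule always_eventually, rule allI)
      fix M
      have "(\<integral>\<^sup>+x. u M x \<partial>lborel) \<le> ennreal (exp ((\<Sum>j<M. (d j)^2)/8))"
        unfolding u_def by (rule mgf)
      also have "(\<Sum>j<M. (d j)^2) = l^2 * (\<Sum>j<M. (if N \<le> j then (c j)^2 else 0))"
        unfolding d_def by (simp add: sum_distrib_left power_mult_distrib) (intro sum.cong, auto)
      also have "(\<Sum>j<M. (if N \<le> j then (c j)^2 else 0)) \<le> V c N"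
        unfolding V_def using V_summable[OF sc] by (intro sum_le_suminf) auto
      then have "ennreal (exp (l^2 * (\<Sum>j<M. (if N \<le> j then (c j)^2 else 0)) / 8)) \<le> ennreal (exp (l^2 * V c N / 8))"
        by (intro ennreal_leI exp_mono divide_right_mono mult_left_mono) auto
      finally show "(\<integral>\<^sup>+x. u M x \<partial>lborel) \<le> ennreal (exp (l^2 * V c N / 8))" .
    qed
  qed
  finally show ?thesis .
qed

lemma markov:
  assumes sc: "summable (\<lambda>j. \<bar>c j\<bar>)"
  shows "emeasure lborel {x \<in> {0..1}. t \<le> l * D c N x} \<le> ennreal (exp (-t) * exp (l^2 * V c N / 8))"
proof -
  note [measurable] = D_meas[OF sc]
  define A where "A = {x \<in> {0..1}. t \<le> l * D c N x}"
  have [measurable]: "A \<in> sets borel" unfolding A_def by measurable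
  have "emeasure lborel A = (\<integral>\<^sup>+x. indicator A x \<partial>lborel)" by simp
  also have "\<dots> \<le> (\<integral>\<^sup>+x. ennreal (exp (-t)) * (indicator {0..1} x * ennreal (exp (l * D c N x))) \<partial>lborel)"
  proof (rule nn_integral_mono)
    fix x
    show "indicator A x \<le> ennreal (exp (-t)) * (indicator {0..1} x * ennreal (exp (l * D c N x)))"
    proof (cases "x \<in> A")
      case True
      then have "1 \<le> exp (-t) * exp (l * D c N x)"
        unfolding A_def by (simp add: exp_add[symmetric])
      then have "ennreal 1 \<le> ennreal (exp (-t) * exp (l * D c N x))" by (rule ennreal_leI)
      then show ?thesis using True unfolding A_def by (simp add: ennreal_mult)
    qed simp
  qed
  also have "\<dots> = ennreal (exp (-t)) * (\<integral>\<^sup>+x. indicator {0..1} x * ennreal (exp (l * D c N x)) \<partial>lborel)"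
    by (rule nn_integral_cmult) auto
  also have "\<dots> \<le> ennreal (exp (-t)) * ennreal (exp (l^2 * V c N / 8))"
    by (intro mult_left_mono mgf_D[OF sc]) auto
  also have "\<dots> = ennreal (exp (-t) * exp (l^2 * V c N / 8))" by (simp add: ennreal_mult)
  finally show ?thesis unfolding A_def .
qed

lemma tail:
  assumes sc: "summable (\<lambda>j. \<bar>c j\<bar>)" and V: "V c N > 0" and t: "t > 0"
  shows "emeasure lborel {x \<in> {0..1}. t \<le> \<bar>D c N x\<bar>} \<le> ennreal (2 * exp (-2 * t^2 / V c N))"
proof -
  note [measurable] = D_meas[OF sc]
  define l where "l = 4 * t / V c N"
  have e: "exp (-(l*t)) * exp (l^2 * V c N / 8) = exp (-2 * t^2 / V c N)"
    unfolding l_def exp_add[symmetric] using V by (simp add: field_simps power2_eq_square)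
  have "{x \<in> {0..1}. t \<le> \<bar>D c N x\<bar>} \<subseteq> {x \<in> {0..1}. t \<le> 1 * D c N x} \<union> {x \<in> {0..1}. t \<le> (-1) * D c N x}"
    by auto
  have "emeasure lborel {x \<in> {0..1}. t \<le> \<bar>D c N x\<bar>} \<le> emeasure lborel ({x \<in> {0..1}. t*l \<le> l * D c N x} \<union> {x \<in> {0..1}. t*l \<le> (-l) * D c N x})"
  proof (rule emeasure_mono)
    have "l > 0" unfolding l_def using V t by simp
    show "{x \<in> {0..1}. t \<le> \<bar>D c N x\<bar>} \<subseteq> {x \<in> {0..1}. t*l \<le> l * D c N x} \<union> {x \<in> {0..1}. t*l \<le> (-l) * D c N x}"
    proof (intro subsetI)
      fix x assume x: "x \<in> {x \<in> {0..1}. t \<le> \<bar>D c N x\<bar>}"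
      show "x \<in> {x \<in> {0..1}. t*l \<le> l * D c N x} \<union> {x \<in> {0..1}. t*l \<le> (-l) * D c N x}"
      proof (cases "D c N x \<ge> 0")
        case True
        then have "t \<le> D c N x" using x by auto
        then have "t*l \<le> l * D c N x" using \<open>l > 0\<close> by (simp add: mult.commute[of t] mult_left_mono)
        then show ?thesis using x by auto
      next
        case False
        then have "t \<le> - D c N x" using x by auto
        then have "l*t \<le> l * (- D c N x)" using \<open>l > 0\<close> by (intro mult_left_mono) auto
        then have "t*l \<le> (-l) * D c N x" by (simp add: mult.commute)
        then show ?thesis using x by auto
      qed
    qed
    show "{x \<in> {0..1}. t*l \<le> l * D c N x} \<union> {x \<in> {0..1}. t*l \<le> (-l) * D c N x} \<in> sets lborel"
      by measurable
  qed
  also have "\<dots> \<le> emeasure lborel {x \<in> {0..1}. t*l \<le> l * D c N x} + emeasure lborel {x \<in> {0..1}. t*l \<le> (-l) * D c N x}"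
    by (rule emeasure_subadditive) measurable
  also have "\<dots> \<le> ennreal (exp (-(t*l)) * exp (l^2 * V c N / 8)) + ennreal (exp (-(t*l)) * exp ((-l)^2 * V c N / 8))"
    by (intro add_mono markov[OF sc])
  also have "\<dots> = ennreal (2 * exp (-2 * t^2 / V c N))"
    using e by (simp add: mult.commute[of t] flip: ennreal_plus)
  finally show ?thesis .
qed

lemma shift0:
  fixes f :: "nat \<Rightarrow> real"
  assumes "summable f" "\<And>i. i < N \<Longrightarrow> f i = 0"
  shows "suminf f = (\<Sum>k. f (k+N))"
  using suminf_split_initial_segment[OF assms(1), of N] assms(2) by simp

lemma V_eq:
  fixes c :: "nat \<Rightarrow> real"
  assumes sc: "summable (\<lambda>j. \<bar>c j\<bar>)"
  shows "V c N = (\<Sum>k. (c (k+N))^2)"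
  unfolding V_def using shift0[OF V_summable[OF sc, of N], of N] by simp

lemma D_eq:
  fixes c :: "nat \<Rightarrow> real"
  assumes sc: "summable (\<lambda>j. \<bar>c j\<bar>)"
  shows "D c N x = (\<Sum>k. c (k+N) * ((tent^^(k+N)) x - 1/2))"
  unfolding D_def using shift0[OF D_summable[OF sc, of N x], of N] by simp

lemma Q_eq:
  fixes c :: "nat \<Rightarrow> real"
  assumes sc: "summable (\<lambda>j. \<bar>c j\<bar>)" and N: "N \<ge> 1"
  shows "(\<Sum>n. c (Suc n) * tent_iter (Suc n) x) - (\<Sum>n\<in>{1..<N}. c n * tent_iter n x)
     = D c N x + (1/2) * (\<Sum>k. c (k+N))"
proof -
  define b where "b n = (if n = 0 then 0 else c n * (tent^^n) x)" for n
  have sb: "summable b"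
  proof (rule summable_comparison_test'[OF sc, of 1])
    fix n :: nat assume n: "n \<ge> 1"
    then have "(tent^^n) x \<in> {0..1}" by (rule funpow_range)
    then have "\<bar>(tent^^n) x\<bar> \<le> 1" by auto
    then show "norm (b n) \<le> \<bar>c n\<bar>" using n by (auto simp: b_def abs_mult intro: mult_left_le)
  qed
  have 1: "(\<Sum>n. c (Suc n) * tent_iter (Suc n) x) = suminf b"
    using suminf_split_head[OF sb] by (simp add: b_def tent_iter_def del: funpow.simps)
  have 2: "suminf b = (\<Sum>k. b (k+N)) + (\<Sum>i<N. b i)"
    by (rule suminf_split_initial_segment[OF sb])
  have "(\<Sum>i<N. b i) = (\<Sum>i\<in>{1..<N}. b i)"
    by (rule sum.mono_neutral_right) (auto simp: b_def)
  also have "\<dots> = (\<Sum>n\<in>{1..<N}. c n * tent_iter n x)"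
    by (rule sum.cong) (auto simp: b_def tent_iter_def)
  finally have 3: "(\<Sum>i<N. b i) = (\<Sum>n\<in>{1..<N}. c n * tent_iter n x)" .
  have s1: "summable (\<lambda>k. c (k+N) * ((tent^^(k+N)) x - 1/2))"
    using summable_ignore_initial_segment[OF D_summable[OF sc, of N x], of N] by simp
  have s2: "summable (\<lambda>k. c (k+N))"
    using summable_ignore_initial_segment[OF summable_rabs_cancel[OF sc], of N] by simp
  have "(\<Sum>k. b (k+N)) = (\<Sum>k. c (k+N) * ((tent^^(k+N)) x - 1/2) + (1/2) * c (k+N))"
    using N by (intro suminf_cong) (auto simp: b_def algebra_simps)
  also have "\<dots> = (\<Sum>k. c (k+N) * ((tent^^(k+N)) x - 1/2)) + (\<Sum>k. (1/2) * c (k+N))"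
    by (rule suminf_add[symmetric]) (use s1 s2 in \<open>auto intro: summable_mult\<close>)
  also have "(\<Sum>k. (1/2) * c (k+N)) = (1/2) * (\<Sum>k. c (k+N))"
    by (rule suminf_mult[OF s2])
  finally have 4: "(\<Sum>k. b (k+N)) = D c N x + (1/2) * (\<Sum>k. c (k+N))"
    using D_eq[OF sc] by simp
  show ?thesis using 1 2 3 4 by simp
qed

theorem theorem1p1:
  fixes c :: "nat \<Rightarrow> real"
  assumes abs_summ: "summable (\<lambda>n. \<bar>c (Suc n)\<bar>)"
    and sq_pos: "\<And>N. N \<ge> 1 \<Longrightarrow> (\<Sum>k. (c (k + N))\<^sup>2) > 0"
    and tail_nz: "\<And>N. N \<ge> 1 \<Longrightarrow> (\<Sum>k. c (k + N)) \<noteq> 0"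
    and exp_summ: "\<And>K::real. K > 0 \<Longrightarrow>
       summable (\<lambda>N. exp (- K * (\<Sum>k. c (k + Suc N))\<^sup>2 / (\<Sum>k. (c (k + Suc N))\<^sup>2)))"
  shows "AE x in lborel. x \<in> {0..1} \<longrightarrow>
     ((\<lambda>N. ((\<Sum>n. c (Suc n) * tent_iter (Suc n) x) - (\<Sum>n\<in>{1..<N}. c n * tent_iter n x))
            / ((1/2) * (\<Sum>k. c (k + N)))) \<longlonglongrightarrow> 1)"
proof -
  have sc: "summable (\<lambda>j. \<bar>c j\<bar>)" using abs_summ summable_Suc_iff by blast
  note [measurable] = D_meas[OF sc]
  define S where "S N = (\<Sum>k. c (k + N))" for N
  define A where "A m n = {x \<in> {0..1}. inverse (real (Suc m)) * \<bar>S (Suc n)\<bar> \<le> \<bar>D c (Suc n) x\<bar>}" for m n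
  have Ameas[measurable]: "A m n \<in> sets lborel" for m n unfolding A_def by measurable
  have Abound: "measure lborel (A m n) \<le> 2 * exp (- (2 * inverse (real (Suc m))^2) * (S (Suc n))\<^sup>2 / (\<Sum>k. (c (k + Suc n))\<^sup>2))"
    and Afin: "emeasure lborel (A m n) < \<infinity>" for m n
  proof -
    let ?e = "inverse (real (Suc m))"
    have V: "V c (Suc n) = (\<Sum>k. (c (k + Suc n))\<^sup>2)" by (rule V_eq[OF sc])
    have Vp: "V c (Suc n) > 0" using sq_pos[of "Suc n"] V by simp
    have t: "?e * \<bar>S (Suc n)\<bar> > 0" using tail_nz[of "Suc n"] by (simp add: S_def)
    have "emeasure lborel (A m n) \<le> ennreal (2 * exp (-2 * (?e * \<bar>S (Suc n)\<bar>)^2 / V c (Suc n)))"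
      unfolding A_def by (rule tail[OF sc Vp t])
    also have "-2 * (?e * \<bar>S (Suc n)\<bar>)^2 / V c (Suc n) = - (2 * ?e^2) * (S (Suc n))\<^sup>2 / (\<Sum>k. (c (k + Suc n))\<^sup>2)"
      by (simp add: V power_mult_distrib)
    finally have le: "emeasure lborel (A m n) \<le> ennreal (2 * exp (- (2 * ?e^2) * (S (Suc n))\<^sup>2 / (\<Sum>k. (c (k + Suc n))\<^sup>2)))" .
    then show "emeasure lborel (A m n) < \<infinity>" by (rule order.strict_trans1) simp
    show "measure lborel (A m n) \<le> 2 * exp (- (2 * ?e^2) * (S (Suc n))\<^sup>2 / (\<Sum>k. (c (k + Suc n))\<^sup>2))"
    proof -
      have "enn2real (emeasure lborel (A m n)) \<le> enn2real (ennreal (2 * exp (- (2 * ?e^2) * (S (Suc n))\<^sup>2 / (\<Sum>k. (c (k + Suc n))\<^sup>2))))"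
        by (rule enn2real_mono[OF le]) simp
      then show ?thesis unfolding measure_def by simp
    qed
  qed
  have "AE x in lborel. eventually (\<lambda>n. x \<in> space lborel - A m n) sequentially" for m
  proof (rule borel_cantelli_AE1)
    show "A m n \<in> sets lborel" for n by (rule Ameas)
    show "emeasure lborel (A m n) < \<infinity>" for n by (rule Afin)
    have K: "2 * inverse (real (Suc m))^2 > 0" by simp
    show "summable (\<lambda>n. measure lborel (A m n))"
    proof (rule summable_comparison_test'[of "\<lambda>n. 2 * exp (- (2 * inverse (real (Suc m))^2) * (S (Suc n))\<^sup>2 / (\<Sum>k. (c (k + Suc n))\<^sup>2))" 0])
      show "summable (\<lambda>n. 2 * exp (- (2 * inverse (real (Suc m))^2) * (S (Suc n))\<^sup>2 / (\<Sum>k. (c (k + Suc n))\<^sup>2)))"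
        using exp_summ[OF K] unfolding S_def by (intro summable_mult)
      show "norm (measure lborel (A m n)) \<le> 2 * exp (- (2 * inverse (real (Suc m))^2) * (S (Suc n))\<^sup>2 / (\<Sum>k. (c (k + Suc n))\<^sup>2))" for n
        using Abound[of m n] by simp
    qed
  qed
  then have "AE x in lborel. \<forall>m. eventually (\<lambda>n. x \<notin> A m n) sequentially"
    by (simp add: AE_all_countable)
  then show ?thesis
  proof (rule eventually_mono)
    fix x :: real
    assume ev: "\<forall>m. eventually (\<lambda>n. x \<notin> A m n) sequentially"
    show "x \<in> {0..1} \<longrightarrow> ((\<lambda>N. ((\<Sum>n. c (Suc n) * tent_iter (Suc n) x) - (\<Sum>n\<in>{1..<N}. c n * tent_iter n x))
            / ((1/2) * (\<Sum>k. c (k + N)))) \<longlonglongrightarrow> 1)"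
    proof
    assume x: "x \<in> {0..1}"
    have ev2: "eventually (\<lambda>N. \<bar>D c N x\<bar> < inverse (real (Suc m)) * \<bar>S N\<bar>) sequentially" for m
    proof -
      have "eventually (\<lambda>n. \<bar>D c (Suc n) x\<bar> < inverse (real (Suc m)) * \<bar>S (Suc n)\<bar>) sequentially"
        using ev[rule_format, of m] by eventually_elim (use x in \<open>auto simp: A_def\<close>)
      then show ?thesis
        by (rule eventually_sequentially_Suc[of "\<lambda>N. \<bar>D c N x\<bar> < inverse (real (Suc m)) * \<bar>S N\<bar>", THEN iffD1])
    qed
    have lim0: "(\<lambda>N. D c N x / S N) \<longlonglongrightarrow> 0"
    proof (rule LIMSEQ_I)
      fix r :: real assume "r > 0"
      then obtain m where m: "inverse (real (Suc m)) < r" using reals_Archimedean by blast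
      have "eventually (\<lambda>N. norm (D c N x / S N - 0) < r) sequentially"
        using ev2[of m] eventually_ge_at_top[of 1]
      proof eventually_elim
        case (elim N)
        then have "S N \<noteq> 0" using tail_nz unfolding S_def by auto
        then have "\<bar>D c N x / S N\<bar> = \<bar>D c N x\<bar> / \<bar>S N\<bar>" by (simp add: abs_divide)
        also have "\<dots> < inverse (real (Suc m))" using elim \<open>S N \<noteq> 0\<close> by (simp add: divide_less_eq)
        finally show ?case using m by simp
      qed
      then show "\<exists>no. \<forall>n\<ge>no. norm (D c n x / S n - 0) < r" by (simp add: eventually_sequentially)
    qed
    then have "(\<lambda>N. 1 + 2 * (D c N x / S N)) \<longlonglongrightarrow> 1 + 2 * 0"
      by (intro tendsto_add tendsto_mult tendsto_const)
    then have lim1: "(\<lambda>N. 1 + 2 * (D c N x / S N)) \<longlonglongrightarrow> 1" by simp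
    show "(\<lambda>N. ((\<Sum>n. c (Suc n) * tent_iter (Suc n) x) - (\<Sum>n\<in>{1..<N}. c n * tent_iter n x))
            / ((1/2) * (\<Sum>k. c (k + N)))) \<longlonglongrightarrow> 1"
    proof (rule Lim_transform_eventually[OF lim1])
      show "eventually (\<lambda>N. 1 + 2 * (D c N x / S N) = ((\<Sum>n. c (Suc n) * tent_iter (Suc n) x) - (\<Sum>n\<in>{1..<N}. c n * tent_iter n x))
            / ((1/2) * (\<Sum>k. c (k + N)))) sequentially"
        using eventually_ge_at_top[of 1]
      proof eventually_elim
        case (elim N)
        then have "S N \<noteq> 0" using tail_nz unfolding S_def by auto
        then show ?case using Q_eq[OF sc elim, of x] unfolding S_def[symmetric]
          by (simp add: field_simps)
      qed
    qed
  qed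
  qed
qed

end
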